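(* Let $S$ and $T$ be asynchronous automaton semigroups. Then the normal ideal extension of $S$ by $T$ is an asynchronous automaton semigroup.
   Context: An asynchronous automaton is $(Q,\Sigma,t,o)$ with $Q$ a finite set of states, $\Sigma$ a finite alphabet, $t:Q\times\Sigma\to Q$ and $o:Q\times\Sigma\to\Sigma^*$. Each state $q$ induces $q:\Sigma^*\to\Sigma^*$ by $q(\emptyset)=\emptyset$, $q(\sigma w)=o(q,\sigma)\,q'(w)$ with $q'=t(q,\sigma)$; an asynchronous automaton semigroup is (a semigroup isomorphic to) the semigroup of maps generated under composition by the states. For semigroups $S,T$, the normal ideal extension of $S$ by $T$ is the disjoint union $S\sqcup T$ with product $x\cdot y=xy$ if $x,y\in S$ or $x,y\in T$, $x\cdot y=y$ if $x\in S,y\in T$, and $x\cdot y=x$ if $x\in T,y\in S$. *)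

theory Defs
  imports Main "HOL-Library.FuncSet"
begin

definition async_automaton ::
  "nat set \<Rightarrow> nat set \<Rightarrow> (nat \<Rightarrow> nat \<Rightarrow> nat) \<Rightarrow> (nat \<Rightarrow> nat \<Rightarrow> nat list) \<Rightarrow> bool" where
  "async_automaton Q Sig t out \<longleftrightarrow> finite Q \<and> finite Sig \<and>
     (\<forall>q\<in>Q. \<forall>a\<in>Sig. t q a \<in> Q \<and> set (out q a) \<subseteq> Sig)"

fun act :: "(nat \<Rightarrow> nat \<Rightarrow> nat) \<Rightarrow> (nat \<Rightarrow> nat \<Rightarrow> nat list) \<Rightarrow> nat \<Rightarrow> nat list \<Rightarrow> nat list" where
  "act t out q [] = []"
| "act t out q (a # w) = out q a @ act t out (t q a) w"

inductive_set sgen :: "'a set \<Rightarrow> ('a \<Rightarrow> 'a \<Rightarrow> 'a) \<Rightarrow> 'a set" for G f where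
  base: "x \<in> G \<Longrightarrow> x \<in> sgen G f"
| step: "x \<in> sgen G f \<Longrightarrow> y \<in> sgen G f \<Longrightarrow> f x y \<in> sgen G f"

definition aut_sgp_carrier ::
  "nat set \<Rightarrow> nat set \<Rightarrow> (nat \<Rightarrow> nat \<Rightarrow> nat) \<Rightarrow> (nat \<Rightarrow> nat \<Rightarrow> nat list) \<Rightarrow> (nat list \<Rightarrow> nat list) set" where
  "aut_sgp_carrier Q Sig t out =
     sgen ((\<lambda>q. restrict (act t out q) (lists Sig)) ` Q) (\<lambda>f g. compose (lists Sig) f g)"

definition sg_iso :: "'a set \<Rightarrow> ('a \<Rightarrow> 'a \<Rightarrow> 'a) \<Rightarrow> 'b set \<Rightarrow> ('b \<Rightarrow> 'b \<Rightarrow> 'b) \<Rightarrow> ('a \<Rightarrow> 'b) \<Rightarrow> bool" where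
  "sg_iso A f B g h \<longleftrightarrow> bij_betw h A B \<and> (\<forall>x\<in>A. \<forall>y\<in>A. h (f x y) = g (h x) (h y))"

definition is_async_aut_sgp :: "'a set \<Rightarrow> ('a \<Rightarrow> 'a \<Rightarrow> 'a) \<Rightarrow> bool" where
  "is_async_aut_sgp A f \<longleftrightarrow> (\<exists>Q Sig t out h. async_automaton Q Sig t out \<and>
     sg_iso A f (aut_sgp_carrier Q Sig t out) (\<lambda>x y. compose (lists Sig) x y) h)"

(* product of the normal ideal extension of S (Inl) by T (Inr); carrier is S <+> T *)
fun nie_mult :: "('a \<Rightarrow> 'a \<Rightarrow> 'a) \<Rightarrow> ('b \<Rightarrow> 'b \<Rightarrow> 'b) \<Rightarrow> 'a + 'b \<Rightarrow> 'a + 'b \<Rightarrow> 'a + 'b" where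
  "nie_mult fS fT (Inl x) (Inl y) = Inl (fS x y)"
| "nie_mult fS fT (Inr x) (Inr y) = Inr (fT x y)"
| "nie_mult fS fT (Inl x) (Inr y) = Inr y"
| "nie_mult fS fT (Inr x) (Inl y) = Inr x"

end

theory Submission
  imports Defs
begin

fun tstar :: "(nat \<Rightarrow> nat \<Rightarrow> nat) \<Rightarrow> nat \<Rightarrow> nat list \<Rightarrow> nat" where
  "tstar t q [] = q" | "tstar t q (a#u) = tstar t (t q a) u"

lemma act_append: "act t out q (u@v) = act t out q u @ act t out (tstar t q u) v"
  by (induction u arbitrary: q) auto

definition actL where "actL t out qs w = foldr (act t out) qs w"

lemma actL_Nil[simp]: "actL t out [] w = w" by (simp add: actL_def)
lemma actL_Cons[simp]: "actL t out (q#qs) w = act t out q (actL t out qs w)" by (simp add: actL_def)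
lemma actL_append: "actL t out (qs@qs') w = actL t out qs (actL t out qs' w)" by (simp add: actL_def)
lemma actL_empty[simp]: "actL t out qs [] = []" by (induction qs) auto

fun tL where "tL t out [] a = []"
  | "tL t out (q#qs) a = tstar t q (actL t out qs [a]) # tL t out qs a"

lemma actL_letter: "actL t out qs (a#u) = actL t out qs [a] @ actL t out (tL t out qs a) u"
  by (induction qs) (simp_all add: act_append)

lemma act_lists: "async_automaton Q Sig t out \<Longrightarrow> q\<in>Q \<Longrightarrow> w \<in> lists Sig \<Longrightarrow> act t out q w \<in> lists Sig"
proof (induction w arbitrary: q)
  case (Cons a w)
  then have "t q a \<in> Q" "set (out q a) \<subseteq> Sig" "a \<in> Sig" unfolding async_automaton_def by auto
  then show ?case using Cons by auto
qed simp

lemma actL_lists: "async_automaton Q Sig t out \<Longrightarrow> set qs \<subseteq> Q \<Longrightarrow> w \<in> lists Sig \<Longrightarrow> actL t out qs w \<in> lists Sig"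
proof (induction qs)
  case (Cons q qs) then show ?case using act_lists[of Q Sig t out q "actL t out qs w"] by simp
qed simp

lemma compose_restrict: "(\<forall>w\<in>A. g w \<in> A) \<Longrightarrow> compose A (restrict f A) (restrict g A) = restrict (\<lambda>w. f (g w)) A"
  by (auto simp: compose_def restrict_def fun_eq_iff)

lemma carrier_eq:
  assumes a: "async_automaton Q Sig t out"
  shows "aut_sgp_carrier Q Sig t out = {restrict (actL t out qs) (lists Sig) | qs. qs \<noteq> [] \<and> set qs \<subseteq> Q}"
proof
  show "aut_sgp_carrier Q Sig t out \<subseteq> {restrict (actL t out qs) (lists Sig) | qs. qs \<noteq> [] \<and> set qs \<subseteq> Q}"
  proof
    fix f assume "f \<in> aut_sgp_carrier Q Sig t out"
    then show "f \<in> {restrict (actL t out qs) (lists Sig) | qs. qs \<noteq> [] \<and> set qs \<subseteq> Q}"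
      unfolding aut_sgp_carrier_def
    proof (induction rule: sgen.induct)
      case (base x)
      then obtain q where "q \<in> Q" "x = restrict (act t out q) (lists Sig)" by auto
      then show ?case by (intro CollectI exI[of _ "[q]"]) auto
    next
      case (step x y)
      then obtain qs qs' where q: "qs \<noteq> []" "set qs \<subseteq> Q" "x = restrict (actL t out qs) (lists Sig)"
        "qs' \<noteq> []" "set qs' \<subseteq> Q" "y = restrict (actL t out qs') (lists Sig)" by blast
      have "compose (lists Sig) x y = restrict (actL t out (qs@qs')) (lists Sig)"
        unfolding q(3,6) by (subst compose_restrict) (use actL_lists[OF a q(5)] in \<open>auto simp: actL_append\<close>)
      then show ?case using q by (intro CollectI exI[of _ "qs@qs'"]) auto
    qed
  qed
next
  show "{restrict (actL t out qs) (lists Sig) | qs. qs \<noteq> [] \<and> set qs \<subseteq> Q} \<subseteq> aut_sgp_carrier Q Sig t out"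
  proof clarify
    fix qs assume "qs \<noteq> []" "set qs \<subseteq> Q"
    then show "restrict (actL t out qs) (lists Sig) \<in> aut_sgp_carrier Q Sig t out"
    proof (induction qs)
      case Nil then show ?case by simp
    next
      case (Cons q qs)
      have g: "restrict (act t out q) (lists Sig) \<in> aut_sgp_carrier Q Sig t out"
        using Cons.prems unfolding aut_sgp_carrier_def by (auto intro: sgen.base)
      show ?case
      proof (cases "qs = []")
        case True
        have eq: "actL t out [q] = act t out q" by (rule ext) simp
        show ?thesis using g by (simp only: True eq)
      next
        case False
        then have ih: "restrict (actL t out qs) (lists Sig) \<in> aut_sgp_carrier Q Sig t out"
          by (rule Cons.IH) (use Cons.prems False in auto)
        have "compose (lists Sig) (restrict (act t out q) (lists Sig)) (restrict (actL t out qs) (lists Sig))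
             = restrict (actL t out (q#qs)) (lists Sig)"
          using Cons.prems by (subst compose_restrict) (use actL_lists[OF a, of qs] in auto)
        then show ?thesis using g ih unfolding aut_sgp_carrier_def by (metis sgen.step)
      qed
    qed
  qed
qed

definition eS :: "nat \<Rightarrow> nat" where "eS a = 2*a+1"
definition eT :: "nat \<Rightarrow> nat" where "eT b = 2*b+2"
definition projT :: "nat list \<Rightarrow> nat list" where
  "projT w = map (\<lambda>x. x div 2 - 1) (filter (\<lambda>x. even x \<and> x \<noteq> 0) w)"

definition tN :: "(nat\<Rightarrow>nat\<Rightarrow>nat) \<Rightarrow> (nat\<Rightarrow>nat\<Rightarrow>nat) \<Rightarrow> nat \<Rightarrow> nat \<Rightarrow> nat" where
 "tN t1 t2 n x = (if even n then (if odd x then 2 * t1 (n div 2) (x div 2) else n)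
    else (if even x \<and> x \<noteq> 0 then 2 * t2 (n div 2) (x div 2 - 1) + 1 else n))"
definition oN :: "(nat\<Rightarrow>nat\<Rightarrow>nat list) \<Rightarrow> (nat\<Rightarrow>nat\<Rightarrow>nat list) \<Rightarrow> nat \<Rightarrow> nat \<Rightarrow> nat list" where
 "oN o1 o2 n x = (if even n then (if odd x then map eS (o1 (n div 2) (x div 2)) else [x])
    else (if even x \<and> x \<noteq> 0 then map eT (o2 (n div 2) (x div 2 - 1)) else []))"

lemma projT_Nil[simp]: "projT [] = []" by (simp add: projT_def)
lemma projT_Cons[simp]: "projT (x#w) = (if even x \<and> x\<noteq>0 then [x div 2 - 1] else []) @ projT w" by (simp add: projT_def)
lemma projT_append[simp]: "projT (u@v) = projT u @ projT v" by (simp add: projT_def)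
lemma projT_mapS[simp]: "projT (map eS u) = []" by (induction u) (simp_all add: projT_def eS_def)
lemma projT_mapT[simp]: "projT (map eT u) = u" by (induction u) (simp_all add: projT_def eT_def)

lemma even_eT: "\<forall>x\<in>set (map eT v). even x" by (auto simp: eT_def)

lemma N1: "even n \<Longrightarrow> \<forall>x\<in>set w. even x \<Longrightarrow> act (tN t1 t2) (oN o1 o2) n w = w"
  by (induction w arbitrary: n) (auto simp: tN_def oN_def)

lemma N2: "even n \<Longrightarrow> projT (act (tN t1 t2) (oN o1 o2) n w) = projT w"
proof (induction w arbitrary: n)
  case (Cons x w) then show ?case by (cases "odd x") (auto simp: tN_def oN_def)
qed simp

lemma N3: "odd n \<Longrightarrow> act (tN t1 t2) (oN o1 o2) n w = map eT (act t2 o2 (n div 2) (projT w))"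
proof (induction w arbitrary: n)
  case (Cons x w) then show ?case by (cases "even x \<and> x \<noteq> 0") (auto simp: tN_def oN_def)
qed simp

lemma N4: "act (tN t1 t2) (oN o1 o2) (2*q) (map eS u @ v) = map eS (act t1 o1 q u) @ act (tN t1 t2) (oN o1 o2) (2 * tstar t1 q u) v"
  by (induction u arbitrary: q) (auto simp: tN_def oN_def eS_def)

lemma N5: "odd x \<Longrightarrow> actL (tN t1 t2) (oN o1 o2) (map (\<lambda>q. 2*q) qs) (x#w) =
   map eS (actL t1 o1 qs [x div 2]) @ actL (tN t1 t2) (oN o1 o2) (map (\<lambda>q. 2*q) (tL t1 o1 qs (x div 2))) w"
proof (induction qs)
  case Nil then show ?case by (simp add: eS_def)
next
  case (Cons q qs) then show ?case by (simp add: N4)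
qed

lemma N6: "even x \<Longrightarrow> actL (tN t1 t2) (oN o1 o2) (map (\<lambda>q. 2*q) qs) (x#w) = x # actL (tN t1 t2) (oN o1 o2) (map (\<lambda>q. 2*q) qs) w"
  by (induction qs) (auto simp: tN_def oN_def)

lemma N7: "actL (tN t1 t2) (oN o1 o2) (map (\<lambda>q. 2*q) qs) (map eS u) = map eS (actL t1 o1 qs u)"
  by (induction qs) (auto simp: N4[where v="[]", simplified])

lemma N9: "\<forall>n\<in>set ns. even n \<Longrightarrow> \<forall>x\<in>set w. even x \<Longrightarrow> actL (tN t1 t2) (oN o1 o2) ns w = w"
  by (induction ns) (auto simp: N1)

lemma N10: "\<forall>n\<in>set ns. even n \<Longrightarrow> projT (actL (tN t1 t2) (oN o1 o2) ns w) = projT w"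
  by (induction ns) (auto simp: N2)

lemma N11: "\<exists>n\<in>set ns. odd n \<Longrightarrow> actL (tN t1 t2) (oN o1 o2) ns w =
   map eT (actL t2 o2 (map (\<lambda>n. n div 2) (filter odd ns)) (projT w))"
proof (induction ns)
  case Nil then show ?case by simp
next
  case (Cons n ns)
  show ?case
  proof (cases "\<exists>n\<in>set ns. odd n")
    case True
    then show ?thesis using Cons by (auto simp: N3 N1 even_eT)
  next
    case False
    then have "filter odd ns = []" by (auto simp: filter_empty_conv)
    then show ?thesis using False Cons.prems by (auto simp: N3 N10)
  qed
qed

definition SigN :: "nat set \<Rightarrow> nat set \<Rightarrow> nat set" where
  "SigN S1 S2 = insert 0 (eS ` S1 \<union> eT ` S2)"
definition QN :: "nat set \<Rightarrow> nat set \<Rightarrow> nat set" where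
  "QN Q1 Q2 = (\<lambda>q. 2*q) ` Q1 \<union> (\<lambda>p. 2*p+1) ` Q2"

lemma odd_SigN: "x \<in> SigN S1 S2 \<Longrightarrow> odd x \<Longrightarrow> x div 2 \<in> S1"
  by (auto simp: SigN_def eS_def eT_def)
lemma even_SigN: "x \<in> SigN S1 S2 \<Longrightarrow> even x \<Longrightarrow> x \<noteq> 0 \<Longrightarrow> x div 2 - 1 \<in> S2"
  by (auto simp: SigN_def eS_def eT_def)
lemma projT_lists: "w \<in> lists (SigN S1 S2) \<Longrightarrow> projT w \<in> lists S2"
proof (induction w)
  case (Cons a w) thus ?case using even_SigN[of a S1 S2] by auto
qed simp
lemma mapS_lists: "u \<in> lists S1 \<Longrightarrow> map eS u \<in> lists (SigN S1 S2)"
  by (auto simp: SigN_def)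
lemma mapT_lists: "u \<in> lists S2 \<Longrightarrow> map eT u \<in> lists (SigN S1 S2)"
  by (auto simp: SigN_def)

lemma NE:
  assumes "\<forall>u\<in>lists S1. actL t1 o1 qs u = actL t1 o1 qs' u" "w \<in> lists (SigN S1 S2)"
  shows "actL (tN t1 t2) (oN o1 o2) (map (\<lambda>q. 2*q) qs) w = actL (tN t1 t2) (oN o1 o2) (map (\<lambda>q. 2*q) qs') w"
  using assms
proof (induction w arbitrary: qs qs')
  case Nil then show ?case by simp
next
  case (Cons x w)
  show ?case
  proof (cases "even x")
    case True then show ?thesis using Cons by (simp add: N6)
  next
    case False
    define a where "a = x div 2"
    have a: "a \<in> S1" using Cons.prems False odd_SigN unfolding a_def by auto
    have h1: "actL t1 o1 qs [a] = actL t1 o1 qs' [a]" using Cons.prems(1) a by auto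
    have h2: "\<forall>u\<in>lists S1. actL t1 o1 (tL t1 o1 qs a) u = actL t1 o1 (tL t1 o1 qs' a) u"
    proof
      fix u assume "u \<in> lists S1"
      then have "actL t1 o1 qs (a#u) = actL t1 o1 qs' (a#u)" using Cons.prems(1) a by auto
      then show "actL t1 o1 (tL t1 o1 qs a) u = actL t1 o1 (tL t1 o1 qs' a) u"
        using h1 by (subst (asm) (1 2) actL_letter) simp
    qed
    have "actL (tN t1 t2) (oN o1 o2) (map (\<lambda>q. 2*q) (tL t1 o1 qs a)) w = actL (tN t1 t2) (oN o1 o2) (map (\<lambda>q. 2*q) (tL t1 o1 qs' a)) w"
      using Cons.IH[OF h2] Cons.prems(2) by simp
    then show ?thesis using False h1 by (simp add: N5 a_def[symmetric])
  qed
qed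

lemma N_async:
  assumes "async_automaton Q1 S1 t1 o1" "async_automaton Q2 S2 t2 o2"
  shows "async_automaton (QN Q1 Q2) (SigN S1 S2) (tN t1 t2) (oN o1 o2)"
  unfolding async_automaton_def
proof (intro conjI ballI)
  show "finite (QN Q1 Q2)" using assms by (simp add: QN_def async_automaton_def)
  show "finite (SigN S1 S2)" using assms by (simp add: SigN_def async_automaton_def)
  fix n x assume n: "n \<in> QN Q1 Q2" and x: "x \<in> SigN S1 S2"
  have "tN t1 t2 n x \<in> QN Q1 Q2 \<and> set (oN o1 o2 n x) \<subseteq> SigN S1 S2"
  proof (cases "even n")
    case True
    then obtain q where q: "q \<in> Q1" "n = 2*q" using n by (auto simp: QN_def)
    show ?thesis
    proof (cases "odd x")
      case True
      then have "x div 2 \<in> S1" using x odd_SigN by auto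
      then have "t1 q (x div 2) \<in> Q1" "set (o1 q (x div 2)) \<subseteq> S1" using assms(1) q by (auto simp: async_automaton_def)
      then show ?thesis using True q by (auto simp: tN_def oN_def QN_def SigN_def)
    next
      case False then show ?thesis using q x by (auto simp: tN_def oN_def QN_def)
    qed
  next
    case False
    then obtain p where p: "p \<in> Q2" "n = 2*p+1" using n by (auto simp: QN_def)
    show ?thesis
    proof (cases "even x \<and> x \<noteq> 0")
      case True
      then have "x div 2 - 1 \<in> S2" using x even_SigN by auto
      then have "t2 p (x div 2 - 1) \<in> Q2" "set (o2 p (x div 2 - 1)) \<subseteq> S2" using assms(2) p by (auto simp: async_automaton_def)
      then show ?thesis using True p by (auto simp: tN_def oN_def QN_def SigN_def)
    next
      case False then show ?thesis using p x by (auto simp: tN_def oN_def QN_def)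
    qed
  qed
  then show "tN t1 t2 n x \<in> QN Q1 Q2" "set (oN o1 o2 n x) \<subseteq> SigN S1 S2" by auto
qed


theorem mainTheorem16:
  fixes S :: "'a set" and fS :: "'a \<Rightarrow> 'a \<Rightarrow> 'a"
    and T :: "'b set" and fT :: "'b \<Rightarrow> 'b \<Rightarrow> 'b"
  assumes "is_async_aut_sgp S fS"
      and "is_async_aut_sgp T fT"
  shows "is_async_aut_sgp (S <+> T) (nie_mult fS fT)"
proof -
  obtain Q1 S1 t1 o1 h1 where a1: "async_automaton Q1 S1 t1 o1"
    and i1: "sg_iso S fS (aut_sgp_carrier Q1 S1 t1 o1) (\<lambda>x y. compose (lists S1) x y) h1"
    using assms(1) unfolding is_async_aut_sgp_def by blast
  obtain Q2 S2 t2 o2 h2 where a2: "async_automaton Q2 S2 t2 o2"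
    and i2: "sg_iso T fT (aut_sgp_carrier Q2 S2 t2 o2) (\<lambda>x y. compose (lists S2) x y) h2"
    using assms(2) unfolding is_async_aut_sgp_def by blast
  have aN: "async_automaton (QN Q1 Q2) (SigN S1 S2) (tN t1 t2) (oN o1 o2)"
    using N_async[OF a1 a2] .
  note C1 = carrier_eq[OF a1] and C2 = carrier_eq[OF a2] and CN = carrier_eq[OF aN]
  have bij1: "bij_betw h1 S (aut_sgp_carrier Q1 S1 t1 o1)"
    and hom1: "\<forall>x\<in>S. \<forall>y\<in>S. h1 (fS x y) = compose (lists S1) (h1 x) (h1 y)"
    using i1 unfolding sg_iso_def by auto
  have bij2: "bij_betw h2 T (aut_sgp_carrier Q2 S2 t2 o2)"
    and hom2: "\<forall>x\<in>T. \<forall>y\<in>T. h2 (fT x y) = compose (lists S2) (h2 x) (h2 y)"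
    using i2 unfolding sg_iso_def by auto
  define LS where "LS qs = restrict (actL (tN t1 t2) (oN o1 o2) (map (\<lambda>q. 2*q) qs)) (lists (SigN S1 S2))" for qs
  define HT where "HT ps = restrict (\<lambda>w. map eT (actL t2 o2 ps (projT w))) (lists (SigN S1 S2))" for ps
  define H where "H = case_sum (\<lambda>s. LS (SOME qs. qs \<noteq> [] \<and> set qs \<subseteq> Q1 \<and> h1 s = restrict (actL t1 o1 qs) (lists S1)))
      (\<lambda>t. restrict (\<lambda>w. map eT (h2 t (projT w))) (lists (SigN S1 S2)))"
  have HS: "H (Inl z) = LS qs" if q: "qs \<noteq> []" "set qs \<subseteq> Q1" "h1 z = restrict (actL t1 o1 qs) (lists S1)" for z qs
  proof -
    let ?P = "\<lambda>qs. qs \<noteq> [] \<and> set qs \<subseteq> Q1 \<and> h1 z = restrict (actL t1 o1 qs) (lists S1)"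
    have "?P qs" using q by blast
    then have P0: "?P (SOME qs. ?P qs)" by (rule someI)
    define q0 where "q0 = (SOME qs. ?P qs)"
    have "\<forall>u\<in>lists S1. actL t1 o1 q0 u = actL t1 o1 qs u"
    proof
      fix u assume u: "u \<in> lists S1"
      have "restrict (actL t1 o1 q0) (lists S1) u = restrict (actL t1 o1 qs) (lists S1) u"
        using P0 q(3) unfolding q0_def by simp
      then show "actL t1 o1 q0 u = actL t1 o1 qs u" using u by simp
    qed
    then have "LS q0 = LS qs" unfolding LS_def by (intro ext) (simp add: NE)
    then show ?thesis unfolding H_def q0_def by simp
  qed
  have hS: "\<exists>qs. qs \<noteq> [] \<and> set qs \<subseteq> Q1 \<and> h1 s = restrict (actL t1 o1 qs) (lists S1)" if "s \<in> S" for s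
  proof -
    have "h1 s \<in> aut_sgp_carrier Q1 S1 t1 o1" using bij1 that by (rule bij_betw_apply)
    then show ?thesis unfolding C1 by blast
  qed
  have hT: "\<exists>ps. ps \<noteq> [] \<and> set ps \<subseteq> Q2 \<and> h2 t = restrict (actL t2 o2 ps) (lists S2)" if "t \<in> T" for t
  proof -
    have "h2 t \<in> aut_sgp_carrier Q2 S2 t2 o2" using bij2 that by (rule bij_betw_apply)
    then show ?thesis unfolding C2 by blast
  qed
  have HTeq: "H (Inr t) = HT ps" if "h2 t = restrict (actL t2 o2 ps) (lists S2)" for t ps
    unfolding H_def HT_def using that by (intro ext) (simp add: projT_lists)
  have LS_lists: "actL (tN t1 t2) (oN o1 o2) (map (\<lambda>q. 2*q) qs) w \<in> lists (SigN S1 S2)"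
    if "set qs \<subseteq> Q1" "w \<in> lists (SigN S1 S2)" for qs w
  proof -
    have "set (map (\<lambda>q. 2*q) qs) \<subseteq> QN Q1 Q2" using that(1) by (auto simp: QN_def)
    then show ?thesis using actL_lists[OF aN _ that(2)] by blast
  qed
  have HT_lists: "map eT (actL t2 o2 ps (projT w)) \<in> lists (SigN S1 S2)"
    if "set ps \<subseteq> Q2" "w \<in> lists (SigN S1 S2)" for ps w
    using mapT_lists[OF actL_lists[OF a2 that(1) projT_lists[OF that(2)]]] .
  have LS_in: "LS qs \<in> aut_sgp_carrier (QN Q1 Q2) (SigN S1 S2) (tN t1 t2) (oN o1 o2)"
    if "qs \<noteq> []" "set qs \<subseteq> Q1" for qs
    unfolding CN LS_def using that by (intro CollectI exI[of _ "map (\<lambda>q. 2*q) qs"]) (auto simp: QN_def)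
  have HT_eq_N: "HT ps = restrict (actL (tN t1 t2) (oN o1 o2) ns) (lists (SigN S1 S2))"
    if "\<exists>n\<in>set ns. odd n" "ps = map (\<lambda>n. n div 2) (filter odd ns)" for ps ns
    unfolding HT_def using that by (intro ext) (simp add: N11)
  have HT_in: "HT ps \<in> aut_sgp_carrier (QN Q1 Q2) (SigN S1 S2) (tN t1 t2) (oN o1 o2)"
    if "ps \<noteq> []" "set ps \<subseteq> Q2" for ps
  proof -
    have "HT ps = restrict (actL (tN t1 t2) (oN o1 o2) (map (\<lambda>p. 2*p+1) ps)) (lists (SigN S1 S2))"
      using that by (intro HT_eq_N) (auto simp: comp_def neq_Nil_conv)
    then show ?thesis unfolding CN using that
      by (intro CollectI exI[of _ "map (\<lambda>p. 2*p+1) ps"]) (auto simp: QN_def)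
  qed
  have img: "H ` (S <+> T) = aut_sgp_carrier (QN Q1 Q2) (SigN S1 S2) (tN t1 t2) (oN o1 o2)"
  proof
    show "H ` (S <+> T) \<subseteq> aut_sgp_carrier (QN Q1 Q2) (SigN S1 S2) (tN t1 t2) (oN o1 o2)"
    proof
      fix f assume "f \<in> H ` (S <+> T)"
      then obtain x where x: "x \<in> S <+> T" "f = H x" by blast
      show "f \<in> aut_sgp_carrier (QN Q1 Q2) (SigN S1 S2) (tN t1 t2) (oN o1 o2)"
      proof (cases x)
        case (Inl s)
        then have "s \<in> S" using x by auto
        then obtain qs where "qs \<noteq> []" "set qs \<subseteq> Q1" "h1 s = restrict (actL t1 o1 qs) (lists S1)"
          using hS by blast
        then show ?thesis using x Inl HS LS_in by metis
      next
        case (Inr t)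
        then have "t \<in> T" using x by auto
        then obtain ps where "ps \<noteq> []" "set ps \<subseteq> Q2" "h2 t = restrict (actL t2 o2 ps) (lists S2)"
          using hT by blast
        then show ?thesis using x Inr HTeq HT_in by metis
      qed
    qed
  next
    show "aut_sgp_carrier (QN Q1 Q2) (SigN S1 S2) (tN t1 t2) (oN o1 o2) \<subseteq> H ` (S <+> T)"
    proof
      fix f assume "f \<in> aut_sgp_carrier (QN Q1 Q2) (SigN S1 S2) (tN t1 t2) (oN o1 o2)"
      then obtain ns where ns: "ns \<noteq> []" "set ns \<subseteq> QN Q1 Q2"
        "f = restrict (actL (tN t1 t2) (oN o1 o2) ns) (lists (SigN S1 S2))" unfolding CN by blast
      show "f \<in> H ` (S <+> T)"
      proof (cases "\<exists>n\<in>set ns. odd n")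
        case False
        define qs where "qs = map (\<lambda>n. n div 2) ns"
        have nsq: "ns = map (\<lambda>q. 2*q) qs" unfolding qs_def using False
          by (induction ns) auto
        have "set qs \<subseteq> Q1"
        proof
          fix q assume "q \<in> set qs"
          then obtain n where n: "n \<in> set ns" "q = n div 2" unfolding qs_def by auto
          then have "even n" "n \<in> QN Q1 Q2" using False ns(2) by auto
          then show "q \<in> Q1" using n(2) by (auto simp: QN_def)
        qed
        moreover have "qs \<noteq> []" using ns(1) nsq by auto
        ultimately have "restrict (actL t1 o1 qs) (lists S1) \<in> aut_sgp_carrier Q1 S1 t1 o1"
          unfolding C1 by blast
        then obtain s where s: "s \<in> S" "h1 s = restrict (actL t1 o1 qs) (lists S1)"
          using bij1 unfolding bij_betw_def by (metis imageE)
        have "H (Inl s) = f" using HS[OF \<open>qs \<noteq> []\<close> \<open>set qs \<subseteq> Q1\<close> s(2)] ns(3) nsq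
          unfolding LS_def by simp
        then show ?thesis using s(1) by force
      next
        case True
        define ps where "ps = map (\<lambda>n. n div 2) (filter odd ns)"
        have "set ps \<subseteq> Q2" using ns(2) unfolding ps_def by (auto simp: QN_def)
        moreover have "ps \<noteq> []" using True unfolding ps_def by (auto simp: filter_empty_conv)
        ultimately have "restrict (actL t2 o2 ps) (lists S2) \<in> aut_sgp_carrier Q2 S2 t2 o2"
          unfolding C2 by blast
        then obtain t where t: "t \<in> T" "h2 t = restrict (actL t2 o2 ps) (lists S2)"
          using bij2 unfolding bij_betw_def by (metis imageE)
        have "H (Inr t) = f" using HTeq[OF t(2)] HT_eq_N[OF True ps_def] ns(3) by simp
        then show ?thesis using t(1) by force
      qed
    qed
  qed
  have inj: "inj_on H (S <+> T)"
  proof (rule inj_onI)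
    fix x y assume x: "x \<in> S <+> T" and y: "y \<in> S <+> T" and e: "H x = H y"
    have hash: "[0] \<in> lists (SigN S1 S2)" by (simp add: SigN_def)
    have LS0: "LS qs [0] = [0]" for qs unfolding LS_def using hash by (simp add: N9)
    have HT0: "HT ps [0] = []" for ps unfolding HT_def using hash by simp
    show "x = y"
    proof (cases x)
      case (Inl s)
      then have sS: "s \<in> S" using x by auto
      then obtain qs where qs: "qs \<noteq> []" "set qs \<subseteq> Q1" "h1 s = restrict (actL t1 o1 qs) (lists S1)"
        using hS by blast
      show ?thesis
      proof (cases y)
        case (Inl s')
        then have sS': "s' \<in> S" using y by auto
        then obtain qs' where qs': "qs' \<noteq> []" "set qs' \<subseteq> Q1" "h1 s' = restrict (actL t1 o1 qs') (lists S1)"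
          using hS by blast
        have LSe: "LS qs = LS qs'" using e Inl \<open>x = Inl s\<close> HS[OF qs] HS[OF qs'] by simp
        have "h1 s = h1 s'"
        proof -
          have "actL t1 o1 qs u = actL t1 o1 qs' u" if u: "u \<in> lists S1" for u
          proof -
            have "LS qs (map eS u) = LS qs' (map eS u)" using LSe by simp
            then have "map eS (actL t1 o1 qs u) = map eS (actL t1 o1 qs' u)"
              unfolding LS_def using mapS_lists[OF u, of S2] by (simp add: N7)
            moreover have "inj eS" by (auto simp: inj_def eS_def)
            ultimately show ?thesis by (simp add: inj_map_eq_map)
          qed
          then show ?thesis unfolding qs(3) qs'(3) by (intro ext) simp
        qed
        then have "s = s'" using bij1 sS sS' unfolding bij_betw_def inj_on_def by blast
        then show ?thesis using Inl \<open>x = Inl s\<close> by simp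
      next
        case (Inr t)
        then have "t \<in> T" using y by auto
        then obtain ps where "ps \<noteq> []" "set ps \<subseteq> Q2" "h2 t = restrict (actL t2 o2 ps) (lists S2)"
          using hT by blast
        then have "LS qs = HT ps" using e Inr \<open>x = Inl s\<close> HS[OF qs] HTeq by metis
        then have "LS qs [0] = HT ps [0]" by simp
        then show ?thesis using LS0 HT0 by simp
      qed
    next
      case (Inr t)
      then have tT: "t \<in> T" using x by auto
      then obtain ps where ps: "ps \<noteq> []" "set ps \<subseteq> Q2" "h2 t = restrict (actL t2 o2 ps) (lists S2)"
        using hT by blast
      show ?thesis
      proof (cases y)
        case (Inl s)
        then have "s \<in> S" using y by auto
        then obtain qs where qs: "qs \<noteq> []" "set qs \<subseteq> Q1" "h1 s = restrict (actL t1 o1 qs) (lists S1)"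
          using hS by blast
        then have "LS qs = HT ps" using e Inl \<open>x = Inr t\<close> HS[OF qs] HTeq[OF ps(3)] by metis
        then have "LS qs [0] = HT ps [0]" by simp
        then show ?thesis using LS0 HT0 by simp
      next
        case (Inr t')
        then have tT': "t' \<in> T" using y by auto
        then obtain ps' where ps': "ps' \<noteq> []" "set ps' \<subseteq> Q2" "h2 t' = restrict (actL t2 o2 ps') (lists S2)"
          using hT by blast
        have HTe: "HT ps = HT ps'" using e Inr \<open>x = Inr t\<close> HTeq[OF ps(3)] HTeq[OF ps'(3)] by metis
        have "h2 t = h2 t'"
        proof -
          have "actL t2 o2 ps u = actL t2 o2 ps' u" if u: "u \<in> lists S2" for u
          proof -
            have "HT ps (map eT u) = HT ps' (map eT u)" using HTe by simp
            then have "map eT (actL t2 o2 ps u) = map eT (actL t2 o2 ps' u)"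
              unfolding HT_def using mapT_lists[OF u, of S1] by simp
            moreover have "inj eT" by (auto simp: inj_def eT_def)
            ultimately show ?thesis by (simp add: inj_map_eq_map)
          qed
          then show ?thesis unfolding ps(3) ps'(3) by (intro ext) simp
        qed
        then have "t = t'" using bij2 tT tT' unfolding bij_betw_def inj_on_def by blast
        then show ?thesis using Inr \<open>x = Inr t\<close> by simp
      qed
    qed
  qed
  have hom: "\<forall>x\<in>S <+> T. \<forall>y\<in>S <+> T. H (nie_mult fS fT x y) = compose (lists (SigN S1 S2)) (H x) (H y)"
  proof (intro ballI)
    fix x y assume x: "x \<in> S <+> T" and y: "y \<in> S <+> T"
    show "H (nie_mult fS fT x y) = compose (lists (SigN S1 S2)) (H x) (H y)"
    proof (cases x)
      case (Inl s)
      then have sS: "s \<in> S" using x by auto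
      then obtain qs where qs: "qs \<noteq> []" "set qs \<subseteq> Q1" "h1 s = restrict (actL t1 o1 qs) (lists S1)"
        using hS by blast
      have Hx: "H x = LS qs" using Inl HS[OF qs] by simp
      show ?thesis
      proof (cases y)
        case (Inl s')
        then have sS': "s' \<in> S" using y by auto
        then obtain qs' where qs': "qs' \<noteq> []" "set qs' \<subseteq> Q1" "h1 s' = restrict (actL t1 o1 qs') (lists S1)"
          using hS by blast
        have "h1 (fS s s') = compose (lists S1) (h1 s) (h1 s')" using hom1 sS sS' by blast
        also have "\<dots> = restrict (actL t1 o1 (qs@qs')) (lists S1)"
          unfolding qs(3) qs'(3) by (subst compose_restrict) (use actL_lists[OF a1 qs'(2)] in \<open>auto simp: actL_append\<close>)
        finally have "H (Inl (fS s s')) = LS (qs@qs')" using qs qs' by (intro HS) auto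
        moreover have "compose (lists (SigN S1 S2)) (LS qs) (LS qs') = LS (qs@qs')"
          unfolding LS_def by (subst compose_restrict) (use LS_lists[OF qs'(2)] in \<open>auto simp: actL_append\<close>)
        ultimately show ?thesis using Hx Inl \<open>x = Inl s\<close> HS[OF qs'] by simp
      next
        case (Inr t)
        then have "t \<in> T" using y by auto
        then obtain ps where ps: "ps \<noteq> []" "set ps \<subseteq> Q2" "h2 t = restrict (actL t2 o2 ps) (lists S2)"
          using hT by blast
        have "compose (lists (SigN S1 S2)) (LS qs) (HT ps) = HT ps"
          unfolding LS_def HT_def by (subst compose_restrict) (use HT_lists[OF ps(2)] in \<open>auto simp: N9 even_eT\<close>)
        then show ?thesis using Hx Inr \<open>x = Inl s\<close> HTeq[OF ps(3)] by simp
      qed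
    next
      case (Inr t)
      then have tT: "t \<in> T" using x by auto
      then obtain ps where ps: "ps \<noteq> []" "set ps \<subseteq> Q2" "h2 t = restrict (actL t2 o2 ps) (lists S2)"
        using hT by blast
      have Hx: "H x = HT ps" using Inr HTeq[OF ps(3)] by simp
      show ?thesis
      proof (cases y)
        case (Inl s)
        then have "s \<in> S" using y by auto
        then obtain qs where qs: "qs \<noteq> []" "set qs \<subseteq> Q1" "h1 s = restrict (actL t1 o1 qs) (lists S1)"
          using hS by blast
        have "compose (lists (SigN S1 S2)) (HT ps) (LS qs) = HT ps"
          unfolding LS_def HT_def by (subst compose_restrict) (use LS_lists[OF qs(2)] in \<open>auto simp: N10\<close>)
        then show ?thesis using Hx Inl \<open>x = Inr t\<close> HS[OF qs] by simp
      next
        case (Inr t')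
        then have tT': "t' \<in> T" using y by auto
        then obtain ps' where ps': "ps' \<noteq> []" "set ps' \<subseteq> Q2" "h2 t' = restrict (actL t2 o2 ps') (lists S2)"
          using hT by blast
        have "h2 (fT t t') = compose (lists S2) (h2 t) (h2 t')" using hom2 tT tT' by blast
        also have "\<dots> = restrict (actL t2 o2 (ps@ps')) (lists S2)"
          unfolding ps(3) ps'(3) by (subst compose_restrict) (use actL_lists[OF a2 ps'(2)] in \<open>auto simp: actL_append\<close>)
        finally have "H (Inr (fT t t')) = HT (ps@ps')" by (rule HTeq)
        moreover have "compose (lists (SigN S1 S2)) (HT ps) (HT ps') = HT (ps@ps')"
          unfolding HT_def by (subst compose_restrict) (use HT_lists[OF ps'(2)] in \<open>auto simp: actL_append\<close>)
        ultimately show ?thesis using Hx Inr \<open>x = Inr t\<close> HTeq[OF ps'(3)] by simp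
      qed
    qed
  qed
  have "sg_iso (S <+> T) (nie_mult fS fT) (aut_sgp_carrier (QN Q1 Q2) (SigN S1 S2) (tN t1 t2) (oN o1 o2))
      (\<lambda>x y. compose (lists (SigN S1 S2)) x y) H"
    unfolding sg_iso_def bij_betw_def using inj img hom by blast
  then show ?thesis unfolding is_async_aut_sgp_def using aN by blast
qed

end
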